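(* For all integers $n\ge 1$, $0\le t\le n$ and $k\ge 1$, \[ \frac{\binom{n}{t}}{S(n,t,k)}\;\le\; F(n,t,k)\;\le\;\left\lceil \frac{\binom nt}{S^{+}(n,t,k)}\cdot n\right\rceil. \]
   Context: A CNF formula over variables $x_1,\dots,x_n$ is a conjunction of clauses (disjunctions of literals); a $k$-CNF has all clauses of width at most $k$; it is monotone if all literals are un-negated variables. $\mathrm{THR}_t:\{0,1\}^n\to\{0,1\}$ is defined by $\mathrm{THR}_t(x)=1$ iff $\sum_i x_i\ge t$. $\mathrm{sat}_t(F)$ is the set of satisfying assignments of $F$ of Hamming weight exactly $t$. $F$ is $t$-admissible if it has no satisfying assignment of Hamming weight less than $t$. $S(n,t,k)$ (resp. $S^+(n,t,k)$) is the maximum of $|\mathrm{sat}_t(F)|$ over all $t$-admissible $k$-CNF (resp. monotone $k$-CNF) formulas $F$ on $n$ variables. $F(n,t,k)$ is the smallest $q$ such that $\mathrm{THR}_t=\bigvee_{i=1}^q\psi_i$ as Boolean functions on $\{0,1\}^n$ for some $k$-CNF formulas $\psi_1,\dots,\psi_q$ on $x_1,\dots,x_n$. *)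

theory Defs
  imports Complex_Main
begin

text \<open>Variables x_1..x_n are represented by indices 0..<n. A literal is a pair (i, b):
  (i, True) is x_i, (i, False) is its negation. An assignment in {0,1}^n is represented by the
  set A \<subseteq> {..<n} of variables set to 1; its Hamming weight is card A.\<close>

type_synonym lit = "nat \<times> bool"
type_synonym clause = "lit set"
type_synonym cnf = "clause set"

definition lit_sat :: "nat set \<Rightarrow> lit \<Rightarrow> bool" where
  "lit_sat A l = ((fst l \<in> A) = snd l)"

definition clause_sat :: "nat set \<Rightarrow> clause \<Rightarrow> bool" where
  "clause_sat A C = (\<exists>l\<in>C. lit_sat A l)"

definition cnf_sat :: "nat set \<Rightarrow> cnf \<Rightarrow> bool" where
  "cnf_sat A F = (\<forall>C\<in>F. clause_sat A C)"

definition is_kcnf :: "nat \<Rightarrow> nat \<Rightarrow> cnf \<Rightarrow> bool" where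
  "is_kcnf n k F = (finite F \<and> (\<forall>C\<in>F. finite C \<and> card C \<le> k \<and> (\<forall>l\<in>C. fst l < n)))"

definition monotone_cnf :: "cnf \<Rightarrow> bool" where
  "monotone_cnf F = (\<forall>C\<in>F. \<forall>l\<in>C. snd l)"

definition sat_t :: "nat \<Rightarrow> nat \<Rightarrow> cnf \<Rightarrow> nat set set" where
  "sat_t n t F = {A. A \<subseteq> {..<n} \<and> card A = t \<and> cnf_sat A F}"

definition admissible :: "nat \<Rightarrow> nat \<Rightarrow> cnf \<Rightarrow> bool" where
  "admissible n t F = (\<forall>A. A \<subseteq> {..<n} \<and> card A < t \<longrightarrow> \<not> cnf_sat A F)"

definition S :: "nat \<Rightarrow> nat \<Rightarrow> nat \<Rightarrow> nat" where
  "S n t k = Max {card (sat_t n t F) | F. is_kcnf n k F \<and> admissible n t F}"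

definition S_mon :: "nat \<Rightarrow> nat \<Rightarrow> nat \<Rightarrow> nat" where
  "S_mon n t k = Max {card (sat_t n t F) | F. is_kcnf n k F \<and> monotone_cnf F \<and> admissible n t F}"

definition F_cov :: "nat \<Rightarrow> nat \<Rightarrow> nat \<Rightarrow> nat" where
  "F_cov n t k = (LEAST q. \<exists>fs :: cnf list. length fs = q \<and> (\<forall>f\<in>set fs. is_kcnf n k f) \<and>
      (\<forall>A. A \<subseteq> {..<n} \<longrightarrow> ((t \<le> card A) = (\<exists>f\<in>set fs. cnf_sat A f))))"

end

theory Submission
  imports Defs "HOL-Combinatorics.Permutations"
begin

definition permf :: "(nat \<Rightarrow> nat) \<Rightarrow> cnf \<Rightarrow> cnf" where
  "permf \<sigma> F = (\<lambda>C. (\<lambda>(i,b). (\<sigma> i, b)) ` C) ` F"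

lemma sat_permf: "cnf_sat A (permf \<sigma> F) = cnf_sat (\<sigma> -` A) F"
proof -
  have "clause_sat A ((\<lambda>(i,b). (\<sigma> i, b)) ` C) = clause_sat (\<sigma> -` A) C" for C
    unfolding clause_sat_def lit_sat_def by (simp add: split_beta)
  then show ?thesis unfolding cnf_sat_def permf_def by simp
qed

lemma kcnf_permf:
  assumes "\<sigma> permutes {..<n}" "is_kcnf n k F"
  shows "is_kcnf n k (permf \<sigma> F)"
proof -
  have s: "\<And>i. i < n \<Longrightarrow> \<sigma> i < n" using permutes_in_image[OF assms(1)] by auto
  have "finite (permf \<sigma> F)" using assms(2) unfolding is_kcnf_def permf_def by simp
  moreover have "finite C' \<and> card C' \<le> k \<and> (\<forall>l\<in>C'. fst l < n)" if Cin: "C' \<in> permf \<sigma> F" for C'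
  proof -
    obtain C where C: "C \<in> F" "C' = (\<lambda>(i,b). (\<sigma> i, b)) ` C" using Cin unfolding permf_def by blast
    have h: "finite C" "card C \<le> k" "\<forall>l\<in>C. fst l < n" using assms(2) C(1) unfolding is_kcnf_def by auto
    have "card C' \<le> k" using C(2) h(2) card_image_le[OF h(1)] le_trans by blast
    moreover have "\<forall>l\<in>C'. fst l < n" using C(2) h(3) s by force
    ultimately show ?thesis using C(2) h(1) by simp
  qed
  ultimately show ?thesis unfolding is_kcnf_def by blast
qed

lemma mono_permf: "monotone_cnf F \<Longrightarrow> monotone_cnf (permf \<sigma> F)"
  unfolding monotone_cnf_def permf_def by force

lemma mono_sat: "monotone_cnf F \<Longrightarrow> B \<subseteq> A \<Longrightarrow> cnf_sat B F \<Longrightarrow> cnf_sat A F"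
  unfolding monotone_cnf_def cnf_sat_def clause_sat_def lit_sat_def by fastforce

lemma vimage_perm:
  assumes "\<sigma> permutes {..<n}" "A \<subseteq> {..<n}"
  shows "\<sigma> -` A \<subseteq> {..<n}" "card (\<sigma> -` A) = card A"
proof -
  show "\<sigma> -` A \<subseteq> {..<n}"
    using assms permutes_not_in by fastforce
  have b: "bij \<sigma>" using permutes_bij[OF assms(1)] .
  have "\<sigma> ` (\<sigma> -` A) = A" using b by (simp add: bij_is_surj surj_image_vimage_eq)
  then have "card A = card (\<sigma> -` A)"
    using card_image[of \<sigma>] b by (metis bij_is_inj inj_on_subset subset_UNIV)
  then show "card (\<sigma> -` A) = card A" by simp
qed

lemma exists_perm:
  fixes n :: nat and B B' :: "nat set"
  assumes "B \<subseteq> {..<n}" "B' \<subseteq> {..<n}" "card B = card B'"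
  shows "\<exists>\<tau>. \<tau> permutes {..<n} \<and> \<tau> ` B' = B"
proof -
  have fB: "finite B" "finite B'" using finite_subset[OF assms(1)] finite_subset[OF assms(2)] by auto
  obtain f where f: "bij_betw f B' B" using finite_same_card_bij[OF fB(2) fB(1)] assms(3) by auto
  have "card ({..<n} - B') = card ({..<n} - B)"
    using assms fB by (simp add: card_Diff_subset)
  then obtain g where g: "bij_betw g ({..<n} - B') ({..<n} - B)"
    using finite_same_card_bij[of "{..<n} - B'" "{..<n} - B"] by auto
  define \<tau> where "\<tau> x = (if x \<in> B' then f x else if x < n then g x else x)" for x
  have e1: "\<And>x. x \<in> B' \<Longrightarrow> \<tau> x = f x" by (simp add: \<tau>_def)
  have e2: "\<And>x. x \<in> {..<n} - B' \<Longrightarrow> \<tau> x = g x" by (simp add: \<tau>_def)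
  have 1: "bij_betw \<tau> B' B" using bij_betw_cong[of B' \<tau> f B] e1 f by blast
  have 2: "bij_betw \<tau> ({..<n} - B') ({..<n} - B)"
    using bij_betw_cong[of "{..<n} - B'" \<tau> g] e2 g by blast
  have "B \<inter> ({..<n} - B) = {}" by blast
  then have "bij_betw \<tau> (B' \<union> ({..<n} - B')) (B \<union> ({..<n} - B))"
    using bij_betw_combine[OF 1 2] by blast
  moreover have "B' \<union> ({..<n} - B') = {..<n}" "B \<union> ({..<n} - B) = {..<n}" using assms(1,2) by auto
  ultimately have "bij_betw \<tau> {..<n} {..<n}" by simp
  moreover have "\<And>x. x \<notin> {..<n} \<Longrightarrow> \<tau> x = x" using assms(2) by (auto simp: \<tau>_def)
  ultimately have "\<tau> permutes {..<n}" by (rule bij_imp_permutes)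
  moreover have "\<tau> ` B' = B" using 1 bij_betw_imp_surj_on by blast
  ultimately show ?thesis by blast
qed

definition Tset :: "nat \<Rightarrow> nat \<Rightarrow> nat set set" where
  "Tset n t = {A. A \<subseteq> {..<n} \<and> card A = t}"
definition Pset :: "nat \<Rightarrow> (nat \<Rightarrow> nat) set" where
  "Pset n = {\<sigma>. \<sigma> permutes {..<n}}"
definition Ncnt :: "nat \<Rightarrow> nat set \<Rightarrow> nat set \<Rightarrow> nat" where
  "Ncnt n A B = card {\<sigma>\<in>Pset n. \<sigma> -` A = B}"

lemma finite_Pset: "finite (Pset n)"
  unfolding Pset_def by (rule finite_permutations) simp

lemma card_Pset: "card (Pset n) = fact n"
  unfolding Pset_def by (rule card_permutations) simp_all

lemma finite_Tset: "finite (Tset n t)"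
proof -
  have "Tset n t \<subseteq> Pow {..<n}" unfolding Tset_def by auto
  then show ?thesis by (rule finite_subset) simp
qed

lemma card_Tset: "card (Tset n t) = n choose t"
  unfolding Tset_def using n_subsets[of "{..<n}" t] by simp

lemma vimage_T: "\<sigma> \<in> Pset n \<Longrightarrow> A \<in> Tset n t \<Longrightarrow> \<sigma> -` A \<in> Tset n t"
  unfolding Pset_def Tset_def using vimage_perm[of \<sigma> n A] by simp

lemma Ncnt_le:
  assumes "A \<in> Tset n t" "B \<in> Tset n t" "B' \<in> Tset n t"
  shows "Ncnt n A B \<le> Ncnt n A B'"
proof -
  obtain \<tau> where \<tau>: "\<tau> permutes {..<n}" "\<tau> ` B' = B"
    using exists_perm[of B n B'] assms(2,3) unfolding Tset_def by auto
  have b: "bij \<tau>" using permutes_bij[OF \<tau>(1)] .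
  have inj: "inj_on (\<lambda>\<sigma>. \<sigma> \<circ> \<tau>) {\<sigma>\<in>Pset n. \<sigma> -` A = B}"
  proof (rule inj_onI)
    fix \<sigma> \<sigma>' assume "\<sigma> \<circ> \<tau> = \<sigma>' \<circ> \<tau>"
    then have "\<And>y. \<sigma> (\<tau> y) = \<sigma>' (\<tau> y)" by (metis comp_apply)
    moreover have "\<And>x. \<exists>y. x = \<tau> y" using b by (metis bij_pointE)
    ultimately show "\<sigma> = \<sigma>'" by (metis ext)
  qed
  have into: "(\<lambda>\<sigma>. \<sigma> \<circ> \<tau>) ` {\<sigma>\<in>Pset n. \<sigma> -` A = B} \<subseteq> {\<sigma>\<in>Pset n. \<sigma> -` A = B'}"
  proof
    fix \<rho> assume "\<rho> \<in> (\<lambda>\<sigma>. \<sigma> \<circ> \<tau>) ` {\<sigma>\<in>Pset n. \<sigma> -` A = B}"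
    then obtain \<sigma> where \<sigma>: "\<sigma> permutes {..<n}" "\<sigma> -` A = B" "\<rho> = \<sigma> \<circ> \<tau>"
      unfolding Pset_def by auto
    have "\<rho> permutes {..<n}" using \<sigma> \<tau> by (simp add: permutes_compose)
    moreover have "\<rho> -` A = \<tau> -` (\<sigma> -` A)" using \<sigma>(3) by (simp add: vimage_comp)
    moreover have "\<tau> -` B = B'" using \<tau>(2) b by (metis bij_is_inj inj_vimage_image_eq)
    ultimately show "\<rho> \<in> {\<sigma>\<in>Pset n. \<sigma> -` A = B'}" using \<sigma>(2) unfolding Pset_def by simp
  qed
  have "finite {\<sigma>\<in>Pset n. \<sigma> -` A = B'}" using finite_Pset by simp
  then show ?thesis unfolding Ncnt_def using card_inj_on_le[OF inj into] by simp
qed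

lemma Ncnt_sum:
  assumes "A \<in> Tset n t"
  shows "(\<Sum>B\<in>Tset n t. Ncnt n A B) = fact n"
proof -
  have "Pset n = (\<Union>B\<in>Tset n t. {\<sigma>\<in>Pset n. \<sigma> -` A = B})"
    using vimage_T[OF _ assms] by blast
  then have "card (Pset n) = card (\<Union>B\<in>Tset n t. {\<sigma>\<in>Pset n. \<sigma> -` A = B})" by simp
  also have "\<dots> = (\<Sum>B\<in>Tset n t. card {\<sigma>\<in>Pset n. \<sigma> -` A = B})"
    by (rule card_UN_disjoint) (use finite_Tset finite_Pset in auto)
  finally show ?thesis unfolding Ncnt_def card_Pset by simp
qed

lemma Ncnt_val:
  assumes "A \<in> Tset n t" "B \<in> Tset n t"
  shows "real (Ncnt n A B) = fact n / real (n choose t)"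
proof -
  have "\<And>B'. B' \<in> Tset n t \<Longrightarrow> Ncnt n A B' = Ncnt n A B"
    using Ncnt_le assms by (meson antisym)
  then have "(\<Sum>B'\<in>Tset n t. Ncnt n A B') = card (Tset n t) * Ncnt n A B" by simp
  then have "card (Tset n t) * Ncnt n A B = fact n" using Ncnt_sum[OF assms(1)] by simp
  moreover have "card (Tset n t) > 0" using assms(2) finite_Tset card_gt_0_iff by blast
  ultimately show ?thesis unfolding card_Tset
    by (metis (mono_tags, lifting) nonzero_mult_div_cancel_left of_nat_0_less_iff of_nat_fact of_nat_mult less_irrefl)
qed

lemma card_filter_sum: "finite U \<Longrightarrow> card {x\<in>U. p x} = (\<Sum>x\<in>U. if p x then 1 else 0)"
  by (simp add: sum.inter_filter[symmetric])

lemma double_count: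
  assumes "U \<subseteq> Tset n t" "X \<subseteq> Tset n t"
  shows "(\<Sum>\<sigma>\<in>Pset n. card {A\<in>U. \<sigma> -` A \<in> X}) = (\<Sum>A\<in>U. \<Sum>B\<in>X. Ncnt n A B)"
proof -
  have fU: "finite U" "finite X" using finite_subset[OF assms(1) finite_Tset] finite_subset[OF assms(2) finite_Tset] by auto
  have "(\<Sum>\<sigma>\<in>Pset n. card {A\<in>U. \<sigma> -` A \<in> X})
      = (\<Sum>\<sigma>\<in>Pset n. \<Sum>A\<in>U. \<Sum>B\<in>X. if \<sigma> -` A = B then 1 else 0)"
    using fU by (simp add: card_filter_sum sum.delta)
  also have "\<dots> = (\<Sum>A\<in>U. \<Sum>B\<in>X. \<Sum>\<sigma>\<in>Pset n. if \<sigma> -` A = B then 1 else 0)"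
    apply (rule trans[OF sum.swap])
    apply (rule sum.cong[OF refl])
    apply (rule sum.swap)
    done
  also have "\<dots> = (\<Sum>A\<in>U. \<Sum>B\<in>X. Ncnt n A B)"
    unfolding Ncnt_def using finite_Pset by (simp add: card_filter_sum)
  finally show ?thesis .
qed

lemma good_perm:
  assumes "U \<subseteq> Tset n t" "X \<subseteq> Tset n t"
  shows "\<exists>\<sigma>\<in>Pset n. real (card {A\<in>U. \<sigma> -` A \<in> X}) \<ge> real (card U) * real (card X) / real (n choose t)"
proof (rule ccontr)
  define c where "c = real (card U) * real (card X) / real (n choose t)"
  assume "\<not> ?thesis"
  then have lt: "\<And>\<sigma>. \<sigma> \<in> Pset n \<Longrightarrow> real (card {A\<in>U. \<sigma> -` A \<in> X}) < c" unfolding c_def using not_le by blast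
  have ne: "Pset n \<noteq> {}" unfolding Pset_def using permutes_id by blast
  have "(\<Sum>\<sigma>\<in>Pset n. real (card {A\<in>U. \<sigma> -` A \<in> X})) < (\<Sum>\<sigma>\<in>Pset n. c)"
    by (rule sum_strict_mono[OF finite_Pset ne lt])
  also have "\<dots> = fact n * c" using card_Pset by simp
  finally have 1: "(\<Sum>\<sigma>\<in>Pset n. real (card {A\<in>U. \<sigma> -` A \<in> X})) < fact n * c" .
  have "(\<Sum>\<sigma>\<in>Pset n. real (card {A\<in>U. \<sigma> -` A \<in> X})) = real (\<Sum>\<sigma>\<in>Pset n. card {A\<in>U. \<sigma> -` A \<in> X})"
    by (simp only: of_nat_sum)
  also have "\<dots> = real (\<Sum>A\<in>U. \<Sum>B\<in>X. Ncnt n A B)"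
    by (simp only: double_count[OF assms])
  also have "\<dots> = (\<Sum>A\<in>U. \<Sum>B\<in>X. real (Ncnt n A B))"
    by (simp only: of_nat_sum)
  also have "\<dots> = (\<Sum>A\<in>U. \<Sum>B\<in>X. fact n / real (n choose t))"
  proof (rule sum.cong[OF refl], rule sum.cong[OF refl])
    fix A B assume "A \<in> U" "B \<in> X"
    then have "A \<in> Tset n t" "B \<in> Tset n t" using assms by (auto simp only: subset_iff)
    then show "real (Ncnt n A B) = fact n / real (n choose t)" by (rule Ncnt_val)
  qed
  also have "\<dots> = fact n * c" unfolding c_def by simp
  finally show False using 1 by simp
qed

lemma iterate:
  assumes "X \<subseteq> Tset n t"
  shows "\<exists>\<sigma>s. length \<sigma>s = m \<and> set \<sigma>s \<subseteq> Pset n \<and>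
    real (card {A\<in>Tset n t. \<forall>\<sigma>\<in>set \<sigma>s. \<sigma> -` A \<notin> X})
      \<le> real (n choose t) * (1 - real (card X) / real (n choose t)) ^ m"
proof (induction m)
  case 0
  show ?case by (rule exI[of _ "[]"]) (simp add: card_Tset)
next
  case (Suc m)
  then obtain \<sigma>s where \<sigma>s: "set \<sigma>s \<subseteq> Pset n"
    "length \<sigma>s = m"
    "real (card {A\<in>Tset n t. \<forall>\<sigma>\<in>set \<sigma>s. \<sigma> -` A \<notin> X})
      \<le> real (n choose t) * (1 - real (card X) / real (n choose t)) ^ m" by blast
  define U where "U = {A\<in>Tset n t. \<forall>\<sigma>\<in>set \<sigma>s. \<sigma> -` A \<notin> X}"
  have UT: "U \<subseteq> Tset n t" unfolding U_def by blast
  obtain \<sigma> where \<sigma>: "\<sigma> \<in> Pset n"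
    "real (card {A\<in>U. \<sigma> -` A \<in> X}) \<ge> real (card U) * real (card X) / real (n choose t)"
    using good_perm[OF UT assms] by blast
  define G where "G = {A\<in>U. \<sigma> -` A \<in> X}"
  have fU: "finite U" using finite_subset[OF UT finite_Tset] .
  have GU: "G \<subseteq> U" unfolding G_def by blast
  have fG: "finite G" using finite_subset[OF GU fU] .
  have eq: "{A\<in>Tset n t. \<forall>\<sigma>'\<in>set (\<sigma>#\<sigma>s). \<sigma>' -` A \<notin> X} = U - G"
    unfolding U_def G_def by auto
  have "card (U - G) = card U - card G" using card_Diff_subset[OF fG GU] .
  moreover have "card G \<le> card U" using card_mono[OF fU GU] .
  ultimately have r: "real (card (U - G)) = real (card U) - real (card G)" by simp
  have sX: "card X \<le> n choose t" using card_mono[OF finite_Tset assms] card_Tset by simp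
  have q: "0 \<le> 1 - real (card X) / real (n choose t)"
    using divide_le_eq_1[of "real (card X)" "real (n choose t)"] sX by auto
  have "real (card (U - G)) \<le> real (card U) - real (card U) * real (card X) / real (n choose t)"
    using r \<sigma>(2) unfolding G_def by linarith
  also have "\<dots> = real (card U) * (1 - real (card X) / real (n choose t))"
    by (simp add: algebra_simps)
  also have "\<dots> \<le> real (n choose t) * (1 - real (card X) / real (n choose t)) ^ m * (1 - real (card X) / real (n choose t))"
    using \<sigma>s(3) q unfolding U_def by (rule mult_right_mono)
  also have "\<dots> = real (n choose t) * (1 - real (card X) / real (n choose t)) ^ Suc m" by simp
  finally have "real (card {A\<in>Tset n t. \<forall>\<sigma>'\<in>set (\<sigma>#\<sigma>s). \<sigma>' -` A \<notin> X})
      \<le> real (n choose t) * (1 - real (card X) / real (n choose t)) ^ Suc m" using eq by simp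
  moreover have "set (\<sigma>#\<sigma>s) \<subseteq> Pset n" "length (\<sigma>#\<sigma>s) = Suc m" using \<sigma>s(1,2) \<sigma>(1) by simp_all
  ultimately show ?case by blast
qed

lemma exp1_gt2: "2 < exp (1::real)"
proof -
  have "1 + 1/2 \<le> exp (1/2::real)" by (rule exp_ge_add_one_self)
  then have "(3/2::real)^2 \<le> exp (1/2) ^ 2" by (intro power_mono) simp_all
  also have "exp (1/2::real) ^ 2 = exp 1" by (simp flip: exp_of_nat_mult)
  finally have "(3/2::real)^2 \<le> exp 1" .
  moreover have "(3/2::real)^2 = 9/4" by (simp add: power2_eq_square)
  ultimately show ?thesis by linarith
qed

lemma choose_lt_exp:
  assumes "n \<ge> 1"
  shows "real (n choose t) < exp (real n)"
proof -
  have "real (n choose t) \<le> 2 ^ n" using binomial_le_pow2[of n t] by (metis of_nat_le_iff of_nat_numeral of_nat_power)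
  also have "(2::real) ^ n < exp 1 ^ n" using exp1_gt2 assms by (intro power_strict_mono) auto
  also have "exp 1 ^ n = exp (real n)" by (simp flip: exp_of_nat_mult)
  finally show ?thesis .
qed

lemma decay:
  fixes C s :: real and m n :: nat
  assumes "0 < C" "0 < s" "s \<le> C" "real m \<ge> C / s * real n" "C < exp (real n)"
  shows "C * (1 - s / C) ^ m < 1"
proof -
  have "1 - s / C \<le> exp (- (s / C))" using exp_ge_add_one_self[of "- (s/C)"] by simp
  moreover have "0 \<le> 1 - s / C" using assms by (simp add: divide_le_eq_1)
  ultimately have "(1 - s / C) ^ m \<le> exp (- (s / C)) ^ m" by (intro power_mono)
  also have "\<dots> = exp (- (real m * (s / C)))" by (simp flip: exp_of_nat_mult)
  also have "\<dots> \<le> exp (- real n)"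
  proof -
    have "C / s * real n * (s / C) = real n" using assms by (simp add: field_simps)
    moreover have "C / s * real n * (s / C) \<le> real m * (s / C)"
      using assms by (intro mult_right_mono) auto
    ultimately show ?thesis by simp
  qed
  finally have "C * (1 - s / C) ^ m \<le> C * exp (- real n)" using assms(1) by simp
  also have "\<dots> < exp (real n) * exp (- real n)" using assms by simp
  also have "\<dots> = 1" by (simp add: exp_minus_inverse)
  finally show ?thesis .
qed

lemma sat_t_sub: "sat_t n t F \<subseteq> Tset n t"
  unfolding sat_t_def Tset_def by auto

lemma card_sat_le: "card (sat_t n t F) \<le> n choose t"
  using card_mono[OF finite_Tset sat_t_sub] card_Tset by metis

lemma fin_vals: "finite {card (sat_t n t F) | F. P F}"
proof -
  have "{card (sat_t n t F) | F. P F} \<subseteq> {..n choose t}" using card_sat_le by auto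
  then show ?thesis by (rule finite_subset) simp
qed

lemma witness:
  fixes n t k :: nat
  assumes "t \<le> n" "k \<ge> 1"
  defines "W \<equiv> (\<lambda>i. {(i, True)}) ` {..<t}"
  shows "is_kcnf n k W" "monotone_cnf W" "admissible n t W" "{..<t} \<in> sat_t n t W"
proof -
  show "is_kcnf n k W" unfolding is_kcnf_def W_def using assms by auto
  show "monotone_cnf W" unfolding monotone_cnf_def W_def by auto
  have sat: "cnf_sat A W \<longleftrightarrow> {..<t} \<subseteq> A" for A
    unfolding cnf_sat_def clause_sat_def lit_sat_def W_def by auto
  show "admissible n t W" unfolding admissible_def
  proof (intro allI impI)
    fix A assume A: "A \<subseteq> {..<n} \<and> card A < t"
    have "finite A" using A finite_subset[of A "{..<n}"] by auto
    then have "{..<t} \<subseteq> A \<Longrightarrow> t \<le> card A" using card_mono[of A "{..<t}"] by simp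
    then show "\<not> cnf_sat A W" using A sat by auto
  qed
  show "{..<t} \<in> sat_t n t W" unfolding sat_t_def using sat assms(1) by auto
qed

theorem mainTheorem3:
  fixes n t k :: nat
  assumes "n \<ge> 1" and "t \<le> n" and "k \<ge> 1"
  shows "real (n choose t) / real (S n t k) \<le> real (F_cov n t k)
     \<and> int (F_cov n t k) \<le> \<lceil>real (n choose t) / real (S_mon n t k) * real n\<rceil>"
proof -
  define C where "C = n choose t"
  have Cpos: "C > 0" unfolding C_def using assms(2) by simp
  define W where "W = (\<lambda>i. {(i, True)}) ` {..<t}"
  note w = witness[OF assms(2,3), folded W_def]
  define V where "V = {card (sat_t n t F) | F. is_kcnf n k F \<and> monotone_cnf F \<and> admissible n t F}"
  have fV: "finite V" unfolding V_def by (rule fin_vals)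
  have WV: "card (sat_t n t W) \<in> V" unfolding V_def using w by blast
  have "S_mon n t k \<in> V" unfolding S_mon_def V_def[symmetric] using fV WV Max_in by blast
  then obtain F0 where F0: "is_kcnf n k F0" "monotone_cnf F0" "admissible n t F0"
    "S_mon n t k = card (sat_t n t F0)" unfolding V_def by blast
  have "card (sat_t n t W) \<ge> 1"
  proof -
    have "finite (sat_t n t W)" using finite_subset[OF sat_t_sub finite_Tset] .
    then show ?thesis using w(4) card_gt_0_iff by (metis One_nat_def Suc_leI empty_iff)
  qed
  then have spos: "S_mon n t k \<ge> 1" unfolding S_mon_def V_def[symmetric]
    using Max_ge[OF fV WV] by linarith
  define X where "X = sat_t n t F0"
  have XT: "X \<subseteq> Tset n t" unfolding X_def by (rule sat_t_sub)
  have cX: "card X = S_mon n t k" unfolding X_def using F0(4) by simp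
  have sC: "S_mon n t k \<le> C" unfolding C_def using cX card_mono[OF finite_Tset XT] card_Tset by metis
  define m where "m = nat \<lceil>real C / real (S_mon n t k) * real n\<rceil>"
  have mge: "real m \<ge> real C / real (S_mon n t k) * real n" unfolding m_def by linarith
  obtain \<sigma>s where \<sigma>s: "set \<sigma>s \<subseteq> Pset n"
    "real (card {A\<in>Tset n t. \<forall>\<sigma>\<in>set \<sigma>s. \<sigma> -` A \<notin> X})
      \<le> real (n choose t) * (1 - real (card X) / real (n choose t)) ^ m"
    and len: "length \<sigma>s = m"
    using iterate[OF XT, of m] by blast
  have "real C * (1 - real (S_mon n t k) / real C) ^ m < 1"
    by (rule decay) (use Cpos spos sC mge choose_lt_exp[OF assms(1)] in \<open>simp_all add: C_def\<close>)
  then have "real (card {A\<in>Tset n t. \<forall>\<sigma>\<in>set \<sigma>s. \<sigma> -` A \<notin> X}) < 1"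
    using \<sigma>s(2)[unfolded cX] unfolding C_def by linarith
  then have "card {A\<in>Tset n t. \<forall>\<sigma>\<in>set \<sigma>s. \<sigma> -` A \<notin> X} = 0"
    by (simp only: of_nat_less_1_iff less_one)
  then have "{A\<in>Tset n t. \<forall>\<sigma>\<in>set \<sigma>s. \<sigma> -` A \<notin> X} = {}"
    using card_0_eq[OF finite_subset[OF _ finite_Tset[of n t]], of "{A\<in>Tset n t. \<forall>\<sigma>\<in>set \<sigma>s. \<sigma> -` A \<notin> X}"] by blast
  then have cov: "\<And>A. A \<in> Tset n t \<Longrightarrow> \<exists>\<sigma>\<in>set \<sigma>s. \<sigma> -` A \<in> X" by blast
  define fs where "fs = map (\<lambda>\<sigma>. permf \<sigma> F0) \<sigma>s"
  have P1: "\<forall>f\<in>set fs. is_kcnf n k f"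
    unfolding fs_def using \<sigma>s(1) F0(1) kcnf_permf unfolding Pset_def by auto
  have P2: "\<forall>A. A \<subseteq> {..<n} \<longrightarrow> ((t \<le> card A) = (\<exists>f\<in>set fs. cnf_sat A f))"
  proof (intro allI impI iffI)
    fix A assume A: "A \<subseteq> {..<n}" "t \<le> card A"
    obtain B where B: "B \<subseteq> A" "card B = t" using obtain_subset_with_card_n[OF A(2)] by metis
    have "B \<in> Tset n t" unfolding Tset_def using A B by auto
    then obtain \<sigma> where \<sigma>: "\<sigma> \<in> set \<sigma>s" "\<sigma> -` B \<in> X" using cov by blast
    then have "cnf_sat (\<sigma> -` B) F0" unfolding X_def sat_t_def by simp
    then have "cnf_sat B (permf \<sigma> F0)" by (simp add: sat_permf)
    then have "cnf_sat A (permf \<sigma> F0)" using mono_sat[OF mono_permf[OF F0(2)] B(1)] by blast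
    then show "\<exists>f\<in>set fs. cnf_sat A f" unfolding fs_def using \<sigma>(1) by auto
  next
    fix A assume A: "A \<subseteq> {..<n}" "\<exists>f\<in>set fs. cnf_sat A f"
    then obtain \<sigma> where \<sigma>: "\<sigma> \<in> set \<sigma>s" "cnf_sat A (permf \<sigma> F0)" unfolding fs_def by auto
    have sp: "\<sigma> permutes {..<n}" using \<sigma>(1) \<sigma>s(1) unfolding Pset_def by auto
    have "cnf_sat (\<sigma> -` A) F0" using \<sigma>(2) by (simp add: sat_permf)
    moreover have "\<sigma> -` A \<subseteq> {..<n}" "card (\<sigma> -` A) = card A" using vimage_perm[OF sp A(1)] by auto
    ultimately show "t \<le> card A" using F0(3) unfolding admissible_def by (metis not_le)
  qed
  have ex: "\<exists>fs :: cnf list. length fs = m \<and> (\<forall>f\<in>set fs. is_kcnf n k f) \<and>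
      (\<forall>A. A \<subseteq> {..<n} \<longrightarrow> ((t \<le> card A) = (\<exists>f\<in>set fs. cnf_sat A f)))"
    using P1 P2 by (intro exI[of _ fs]) (simp add: fs_def len)
  have Fm: "F_cov n t k \<le> m" unfolding F_cov_def by (rule Least_le) (rule ex)
  have up: "int (F_cov n t k) \<le> \<lceil>real (n choose t) / real (S_mon n t k) * real n\<rceil>"
  proof -
    have h1: "0 \<le> real C / real (S_mon n t k) * real n" by simp
    have h2: "real C / real (S_mon n t k) * real n \<le> of_int \<lceil>real C / real (S_mon n t k) * real n\<rceil>"
      by (rule le_of_int_ceiling)
    from h1 h2 have "(0::real) \<le> of_int \<lceil>real C / real (S_mon n t k) * real n\<rceil>" by linarith
    then have "0 \<le> \<lceil>real C / real (S_mon n t k) * real n\<rceil>" by (simp only: of_int_0_le_iff)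
    then have "int m = \<lceil>real C / real (S_mon n t k) * real n\<rceil>" unfolding m_def by simp
    then show ?thesis using Fm unfolding C_def by linarith
  qed
  obtain gs where gs: "length gs = F_cov n t k" "\<forall>f\<in>set gs. is_kcnf n k f"
      "\<forall>A. A \<subseteq> {..<n} \<longrightarrow> ((t \<le> card A) = (\<exists>f\<in>set gs. cnf_sat A f))"
  proof -
    have exq: "\<exists>q. \<exists>fs :: cnf list. length fs = q \<and> (\<forall>f\<in>set fs. is_kcnf n k f) \<and>
      (\<forall>A. A \<subseteq> {..<n} \<longrightarrow> ((t \<le> card A) = (\<exists>f\<in>set fs. cnf_sat A f)))" using ex by blast
    show ?thesis using LeastI_ex[OF exq] that unfolding F_cov_def[symmetric] by blast
  qed
  define V2 where "V2 = {card (sat_t n t F) | F. is_kcnf n k F \<and> admissible n t F}"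
  have fV2: "finite V2" unfolding V2_def by (rule fin_vals)
  have bnd: "card (sat_t n t f) \<le> S n t k" if f: "f \<in> set gs" for f
  proof -
    have "admissible n t f" unfolding admissible_def using gs(3) f by (metis not_le)
    then have "card (sat_t n t f) \<in> V2" unfolding V2_def using gs(2) f by blast
    then show ?thesis unfolding S_def V2_def[symmetric] using Max_ge[OF fV2] by blast
  qed
  have "Tset n t \<subseteq> (\<Union>f\<in>set gs. sat_t n t f)"
  proof
    fix A assume "A \<in> Tset n t"
    then have A: "A \<subseteq> {..<n}" "card A = t" unfolding Tset_def by auto
    then obtain f where "f \<in> set gs" "cnf_sat A f" using gs(3) by auto
    then show "A \<in> (\<Union>f\<in>set gs. sat_t n t f)" unfolding sat_t_def using A by auto
  qed
  then have "C \<le> card (\<Union>f\<in>set gs. sat_t n t f)"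
    unfolding C_def card_Tset[symmetric]
    by (rule card_mono[rotated]) (auto intro: finite_subset[OF sat_t_sub finite_Tset])
  also have "\<dots> \<le> (\<Sum>f\<in>set gs. card (sat_t n t f))" by (rule card_UN_le) simp
  also have "\<dots> \<le> card (set gs) * S n t k" using sum_bounded_above[of "set gs" "\<lambda>f. card (sat_t n t f)" "S n t k"] bnd by simp
  also have "\<dots> \<le> F_cov n t k * S n t k" using card_length[of gs] gs(1) by simp
  finally have lowN: "C \<le> F_cov n t k * S n t k" .
  have low: "real (n choose t) / real (S n t k) \<le> real (F_cov n t k)"
  proof (cases "S n t k = 0")
    case True then show ?thesis by simp
  next
    case False
    have "real C \<le> real (F_cov n t k) * real (S n t k)" using lowN by (metis of_nat_le_iff of_nat_mult)
    then show ?thesis using False unfolding C_def by (simp add: divide_le_eq)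
  qed
  show ?thesis using low up by blast
qed

end
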